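(* For every integer $i\geq 8$ there exist an integer $j<i$ and directed graphs $G$ and $H$ such that $G$ has diameter $i$, $H$ has diameter $j$, and the directed edge polytopes of $G$ and $H$ have the same volume.
   Context: For a directed graph $D=(V,A)$, its directed edge polytope is the convex hull in $\mathbb{R}^V$ of the vectors $e_v-e_w$ for all arcs $(w,v)\in A$, where $(e_u)_{u\in V}$ is the standard basis. The distance from $u$ to $v$ is the number of arcs of a shortest directed path from $u$ to $v$ ($\infty$ if none exists), and the diameter is the maximum distance over all ordered pairs of vertices. *)

theory Defs
  imports "HOL-Analysis.Analysis" "HOL-Library.Extended_Nat"
begin

definition digraph :: "nat set \<Rightarrow> (nat \<times> nat) set \<Rightarrow> bool" where
  "digraph V A \<longleftrightarrow> finite V \<and> A \<subseteq> V \<times> V \<and> (\<forall>(w,v)\<in>A. w \<noteq> v)"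

text \<open>Distance: number of arcs of a shortest directed path (infinity if none).
A walk of length n from u to v exists iff (u,v) is in A^^n; a shortest walk is a path.\<close>
definition ddist :: "(nat \<times> nat) set \<Rightarrow> nat \<Rightarrow> nat \<Rightarrow> enat" where
  "ddist A u v = (if \<exists>n. (u, v) \<in> A ^^ n then enat (LEAST n. (u, v) \<in> A ^^ n) else \<infinity>)"

definition diameter :: "nat set \<Rightarrow> (nat \<times> nat) set \<Rightarrow> enat" where
  "diameter V A = (SUP u\<in>V. SUP v\<in>V. ddist A u v)"

definition arc_vec :: "nat \<times> nat \<Rightarrow> (nat \<Rightarrow> real)" where
  "arc_vec a = (\<lambda>u. (if u = snd a then 1 else 0) - (if u = fst a then 1 else 0))"

definition dir_edge_polytope :: "(nat \<times> nat) set \<Rightarrow> (nat \<Rightarrow> real) set" where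
  "dir_edge_polytope A =
     {x. \<exists>c. (\<forall>a\<in>A. 0 \<le> c a) \<and> (\<Sum>a\<in>A. c a) = 1 \<and> x = (\<lambda>u. \<Sum>a\<in>A. c a * arc_vec a u)}"

text \<open>Normalized volume of the directed edge polytope of a digraph whose polytope has
dimension |V|-1 (e.g. any strongly connected digraph, in particular any digraph of finite
diameter).  The polytope lies in the hyperplane sum x = 0, whose lattice points project
unimodularly onto Z^(V - {v0}) by forgetting the coordinate v0 = Min V.  So the normalized
volume is (|V|-1)! times the Lebesgue measure of this projection.\<close>
definition norm_volume :: "nat set \<Rightarrow> (nat \<times> nat) set \<Rightarrow> real" where
  "norm_volume V A =
     (let W = V - {Min V} in
      fact (card W) *
        measure (Pi\<^sub>M W (\<lambda>_. lborel)) ((\<lambda>x. restrict x W) ` dir_edge_polytope A))"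

end

theory Submission
  imports Defs
begin

definition reach :: "(nat \<times> nat) set \<Rightarrow> nat \<Rightarrow> nat \<Rightarrow> nat \<Rightarrow> bool" where
  "reach A n u v \<longleftrightarrow> (\<exists>k\<le>n. (u, v) \<in> A ^^ k)"

lemma ddist_le: "(u, v) \<in> A ^^ n \<Longrightarrow> ddist A u v \<le> enat n"
  unfolding ddist_def by (auto intro: Least_le)

lemma reach_ddist: "reach A n u v \<Longrightarrow> ddist A u v \<le> enat n"
  unfolding reach_def by (meson ddist_le enat_ord_simps(1) order_trans)

lemma ddist_ge: "(\<And>n. (u, v) \<in> A ^^ n \<Longrightarrow> k \<le> n) \<Longrightarrow> enat k \<le> ddist A u v"
  unfolding ddist_def by (auto intro: LeastI2_ex)

lemma reach_refl: "reach A n u u"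
  unfolding reach_def by (rule exI[of _ 0]) auto

lemma reach_arc: "(u, v) \<in> A \<Longrightarrow> 1 \<le> n \<Longrightarrow> reach A n u v"
  unfolding reach_def by (rule exI[of _ 1]) auto

lemma reach_trans: "reach A n u v \<Longrightarrow> reach A m v w \<Longrightarrow> n + m \<le> p \<Longrightarrow> reach A p u w"
  unfolding reach_def
proof (elim exE conjE)
  fix k l assume "k \<le> n" "(u, v) \<in> A ^^ k" "l \<le> m" "(v, w) \<in> A ^^ l" "n + m \<le> p"
  then have "(u, w) \<in> A ^^ (k + l)" by (auto simp: relpow_add)
  then show "\<exists>k\<le>p. (u, w) \<in> A ^^ k" using \<open>k \<le> n\<close> \<open>l \<le> m\<close> \<open>n + m \<le> p\<close>
    by (intro exI[of _ "k+l"]) auto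
qed

lemma potential:
  assumes "\<And>a b. (a, b) \<in> A \<Longrightarrow> \<phi> b \<le> \<phi> a + (1::int)"
  shows "(u, v) \<in> A ^^ n \<Longrightarrow> \<phi> v \<le> \<phi> u + int n"
proof (induction n arbitrary: v)
  case 0 then show ?case by simp
next
  case (Suc n)
  then obtain w where "(u, w) \<in> A ^^ n" "(w, v) \<in> A" by auto
  with Suc.IH[of w] assms[of w v] show ?case by simp
qed

definition VV :: "nat \<Rightarrow> nat set" where "VV i = {0..i}"
definition SS :: "nat \<Rightarrow> nat set" where "SS i = {3..i}"
definition AH :: "nat \<Rightarrow> (nat \<times> nat) set" where
  "AH i = {(0,1),(1,2),(2,0),(1,0),(0,3)} \<union> {(t,t+1)| t. 3\<le>t \<and> t<i} \<union> {(t,0)| t. 3\<le>t \<and> t\<le>i}"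
definition AG :: "nat \<Rightarrow> (nat \<times> nat) set" where
  "AG i = {(0,1),(1,2),(2,0),(1,0),(3,0)} \<union> {(t+1,t)| t. 3\<le>t \<and> t<i} \<union> {(0,t)| t. 3\<le>t \<and> t\<le>i}"

lemma digraph_H: "i \<ge> 3 \<Longrightarrow> digraph (VV i) (AH i)"
  unfolding digraph_def VV_def AH_def by auto

lemma digraph_G: "i \<ge> 3 \<Longrightarrow> digraph (VV i) (AG i)"
  unfolding digraph_def VV_def AG_def by auto

lemma chain_H: "d \<le> i - 3 \<Longrightarrow> reach (AH i) d 3 (3 + d)"
proof (induction d)
  case 0 then show ?case by (simp add: reach_refl)
next
  case (Suc d)
  have "(3 + d, 3 + Suc d) \<in> AH i" using Suc.prems unfolding AH_def by auto
  moreover have "reach (AH i) d 3 (3 + d)" using Suc by simp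
  ultimately show ?case using reach_trans[OF _ reach_arc, of "AH i" d 3 "3+d" "3 + Suc d" 1 "Suc d"] by simp
qed

lemma chain_G: "d \<le> i - 3 \<Longrightarrow> reach (AG i) d (3 + d) 3"
proof (induction d)
  case 0 then show ?case by (simp add: reach_refl)
next
  case (Suc d)
  have "(3 + Suc d, 3 + d) \<in> AG i" using Suc.prems unfolding AG_def by auto
  moreover have "reach (AG i) d (3 + d) 3" using Suc by simp
  ultimately show ?case using reach_trans[OF reach_arc _, of "3 + Suc d" "3+d" "AG i" 1 d 3 "Suc d"] by simp
qed

lemma H_to0: "i \<ge> 3 \<Longrightarrow> u \<in> VV i \<Longrightarrow> reach (AH i) 1 u 0"
proof (cases "u = 0")
  case True then show ?thesis by (simp add: reach_refl)
next
  case False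
  assume "i \<ge> 3" "u \<in> VV i"
  then have "(u, 0) \<in> AH i" using False unfolding VV_def AH_def by auto
  then show ?thesis by (rule reach_arc) simp
qed

lemma H_from0: assumes "i \<ge> 4" "v \<in> VV i" shows "reach (AH i) (i - 2) 0 v"
proof -
  have a01: "(0,1) \<in> AH i" and a12: "(1,2) \<in> AH i" and a03: "(0,3) \<in> AH i" by (auto simp: AH_def)
  consider "v = 0" | "v = 1" | "v = 2" | "3 \<le> v" "v \<le> i" using assms unfolding VV_def by fastforce
  then show ?thesis
  proof cases
    case 1 then show ?thesis by (simp add: reach_refl)
  next
    case 2 then show ?thesis using a01 assms by (intro reach_arc) auto
  next
    case 3 then show ?thesis using reach_trans[OF reach_arc[OF a01 order_refl] reach_arc[OF a12 order_refl], of "i - 2"] assms by simp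
  next
    case 4
    have "reach (AH i) (v - 3) 3 v" using chain_H[of "v - 3" i] 4 by auto
    then show ?thesis using 4 by (intro reach_trans[OF reach_arc[OF a03 order_refl]]) auto
  qed
qed

lemma G_to0: assumes "i \<ge> 4" "u \<in> VV i" shows "reach (AG i) (i - 2) u 0"
proof -
  have a10: "(1,0) \<in> AG i" and a20: "(2,0) \<in> AG i" and a30: "(3,0) \<in> AG i" by (auto simp: AG_def)
  consider "u = 0" | "u = 1" | "u = 2" | "3 \<le> u" "u \<le> i" using assms unfolding VV_def by fastforce
  then show ?thesis
  proof cases
    case 1 then show ?thesis by (simp add: reach_refl)
  next
    case 2 then show ?thesis using a10 assms by (intro reach_arc) auto
  next
    case 3 then show ?thesis using a20 assms by (intro reach_arc) auto
  next
    case 4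
    have "reach (AG i) (u - 3) u 3" using chain_G[of "u - 3" i] 4 by auto
    then show ?thesis using 4 by (intro reach_trans[OF _ reach_arc[OF a30 order_refl]]) auto
  qed
qed

lemma G_from0: assumes "i \<ge> 3" "v \<in> VV i" shows "reach (AG i) 2 0 v"
proof -
  have a01: "(0,1) \<in> AG i" and a12: "(1,2) \<in> AG i" by (auto simp: AG_def)
  consider "v = 0" | "v = 1" | "v = 2" | "3 \<le> v" "v \<le> i" using assms unfolding VV_def by fastforce
  then show ?thesis
  proof cases
    case 1 then show ?thesis by (simp add: reach_refl)
  next
    case 2 then show ?thesis using a01 by (intro reach_arc) auto
  next
    case 3 then show ?thesis using reach_trans[OF reach_arc[OF a01 order_refl] reach_arc[OF a12 order_refl], of 2] by simp
  next
    case 4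
    then have "(0, v) \<in> AG i" by (auto simp: AG_def)
    then show ?thesis by (intro reach_arc) auto
  qed
qed

lemma diam_le: "(\<And>u v. u \<in> V \<Longrightarrow> v \<in> V \<Longrightarrow> ddist A u v \<le> n) \<Longrightarrow> diameter V A \<le> n"
  unfolding diameter_def by (intro SUP_least) auto

lemma diam_H: assumes "i \<ge> 4" shows "diameter (VV i) (AH i) \<le> enat (i - 1)"
proof (rule diam_le)
  fix u v assume "u \<in> VV i" "v \<in> VV i"
  then have "reach (AH i) (i - 1) u v"
    using reach_trans[OF H_to0[of i u] H_from0[of i v], of "i - 1"] assms by simp
  then show "ddist (AH i) u v \<le> enat (i - 1)" by (rule reach_ddist)
qed

lemma diam_G: assumes "i \<ge> 4" shows "diameter (VV i) (AG i) = enat i"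
proof (rule antisym)
  show "diameter (VV i) (AG i) \<le> enat i"
  proof (rule diam_le)
    fix u v assume "u \<in> VV i" "v \<in> VV i"
    then have "reach (AG i) i u v"
      using reach_trans[OF G_to0[of i u] G_from0[of i v], of i] assms by simp
    then show "ddist (AG i) u v \<le> enat i" by (rule reach_ddist)
  qed
next
  define \<phi> where "\<phi> = (\<lambda>t::nat. if t = 0 then int i - 2 else if t = 1 then int i - 1
     else if t = 2 then int i else int i - int t)"
  have arcs: "\<phi> b \<le> \<phi> a + 1" if "(a, b) \<in> AG i" for a b
  proof -
    from that consider "(a,b) \<in> {(0,1),(1,2),(2,0),(1,0),(3,0)}"
      | t where "a = t+1" "b = t" "3\<le>t" "t<i" | t where "a = 0" "b = t" "3\<le>t" "t\<le>i"
      unfolding AG_def by blast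
    then show ?thesis
    proof cases
      case 1 then show ?thesis using assms by (auto simp: \<phi>_def)
    next
      case 2 then show ?thesis by (simp add: \<phi>_def)
    next
      case 3 then show ?thesis using assms by (simp add: \<phi>_def)
    qed
  qed
  have "enat i \<le> ddist (AG i) i 2"
  proof (rule ddist_ge)
    fix n assume "(i, 2) \<in> AG i ^^ n"
    from potential[of "AG i" \<phi>, OF arcs this] assms show "i \<le> n" by (simp add: \<phi>_def)
  qed
  also have "ddist (AG i) i 2 \<le> (SUP v\<in>VV i. ddist (AG i) i v)"
    by (rule SUP_upper) (use assms in \<open>simp add: VV_def\<close>)
  also have "\<dots> \<le> diameter (VV i) (AG i)"
    unfolding diameter_def by (rule SUP_upper[of i "VV i" "\<lambda>u. SUP v\<in>VV i. ddist (AG i) u v"]) (simp add: VV_def)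
  finally show "enat i \<le> diameter (VV i) (AG i)" .
qed


definition flip :: "nat set \<Rightarrow> nat set \<Rightarrow> (nat \<Rightarrow> real) \<Rightarrow> (nat \<Rightarrow> real)" where
  "flip W S x = (\<lambda>k\<in>W. if k \<in> S then - x k else x k)"

lemma flip_measurable[measurable]:
  "flip W S \<in> measurable (PiM W (\<lambda>_. lborel)) (PiM W (\<lambda>_. lborel))"
  unfolding flip_def by measurable

lemma distr_flip:
  assumes "finite W"
  shows "distr (PiM W (\<lambda>_. lborel)) (PiM W (\<lambda>_. lborel)) (flip W S) = PiM W (\<lambda>_. lborel :: real measure)"
proof -
  interpret product_sigma_finite "\<lambda>_. lborel :: real measure"
    by (simp add: product_sigma_finite_def sigma_finite_lborel)
  show ?thesis
  proof (rule PiM_eqI[OF assms])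
    show "sets (distr (PiM W (\<lambda>_. lborel)) (PiM W (\<lambda>_. lborel)) (flip W S)) = sets (PiM W (\<lambda>_. lborel))"
      by simp
  next
    fix A assume A: "\<And>i. i \<in> W \<Longrightarrow> A i \<in> sets (lborel :: real measure)"
    let ?B = "\<lambda>k. if k \<in> S then uminus -` A k else A k"
    have um_meas: "uminus \<in> borel_measurable (lborel :: real measure)" by measurable
    have B: "?B k \<in> sets lborel" if "k \<in> W" for k
    proof -
      have "A k \<in> sets borel" using A[OF that] by simp
      from measurable_sets[OF um_meas this] A[OF that] show ?thesis by auto
    qed
    have pre: "flip W S -` Pi\<^sub>E W A \<inter> space (PiM W (\<lambda>_. lborel)) = Pi\<^sub>E W ?B"
      by (auto simp: flip_def space_PiM PiE_iff extensional_def split: if_splits)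
    have um: "emeasure lborel (uminus -` X) = emeasure lborel (X :: real set)" if "X \<in> sets lborel" for X
    proof -
      have "emeasure (distr lborel borel uminus) X = emeasure lborel (uminus -` X \<inter> space lborel)"
        using that by (intro emeasure_distr) auto
      then show ?thesis by (simp add: lborel_distr_uminus)
    qed
    have "emeasure (distr (PiM W (\<lambda>_. lborel)) (PiM W (\<lambda>_. lborel)) (flip W S)) (Pi\<^sub>E W A)
        = emeasure (PiM W (\<lambda>_. lborel)) (flip W S -` Pi\<^sub>E W A \<inter> space (PiM W (\<lambda>_. lborel)))"
      using A by (intro emeasure_distr) (auto intro: sets_PiM_I_finite assms)
    also have "\<dots> = emeasure (PiM W (\<lambda>_. lborel)) (Pi\<^sub>E W ?B)" by (simp only: pre)
    also have "\<dots> = (\<Prod>k\<in>W. emeasure lborel (?B k))"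
      using B by (intro emeasure_PiM assms) auto
    also have "\<dots> = (\<Prod>k\<in>W. emeasure lborel (A k))"
      using A by (intro prod.cong refl) (auto simp: um)
    finally show "emeasure (distr (PiM W (\<lambda>_. lborel)) (PiM W (\<lambda>_. lborel)) (flip W S)) (Pi\<^sub>E W A)
        = (\<Prod>k\<in>W. emeasure lborel (A k))" .
  qed
qed

lemma flip_flip: "x \<in> space (PiM W (\<lambda>_. lborel)) \<Longrightarrow> flip W S (flip W S x) = x"
  by (auto simp: flip_def space_PiM PiE_iff extensional_def fun_eq_iff)

lemma flip_space: "flip W S x \<in> space (PiM W (\<lambda>_. lborel))"
  by (auto simp: flip_def space_PiM)

lemma measure_flip_image:
  assumes "finite W" "X \<subseteq> space (PiM W (\<lambda>_. lborel))"
  shows "measure (PiM W (\<lambda>_. lborel)) (flip W S ` X) = measure (PiM W (\<lambda>_. lborel :: real measure)) X"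
proof -
  let ?M = "PiM W (\<lambda>_. lborel :: real measure)"
  have img: "flip W S ` X = flip W S -` X \<inter> space ?M"
  proof
    show "flip W S ` X \<subseteq> flip W S -` X \<inter> space ?M"
      using assms(2) by (auto simp: flip_flip flip_space)
    show "flip W S -` X \<inter> space ?M \<subseteq> flip W S ` X"
    proof
      fix x assume "x \<in> flip W S -` X \<inter> space ?M"
      then show "x \<in> flip W S ` X" by (intro image_eqI[of _ _ "flip W S x"]) (auto simp: flip_flip)
    qed
  qed
  show ?thesis
  proof (cases "X \<in> sets ?M")
    case True
    have "measure (distr ?M ?M (flip W S)) X = measure ?M (flip W S -` X \<inter> space ?M)"
      using True by (intro measure_distr) auto
    then show ?thesis using distr_flip[OF assms(1), of S] img by simp
  next
    case False
    have "flip W S -` X \<inter> space ?M \<notin> sets ?M"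
    proof
      assume "flip W S -` X \<inter> space ?M \<in> sets ?M"
      then have "flip W S -` (flip W S -` X \<inter> space ?M) \<inter> space ?M \<in> sets ?M"
        by (rule measurable_sets[OF flip_measurable])
      moreover have "flip W S -` (flip W S -` X \<inter> space ?M) \<inter> space ?M = X"
        using assms(2) by (auto simp: flip_flip flip_space)
      ultimately have "X \<in> sets ?M" by metis
      then show False using False by simp
    qed
    then show ?thesis using False img by (simp add: measure_notin_sets)
  qed
qed


definition gS :: "nat set \<Rightarrow> nat \<times> nat \<Rightarrow> nat \<times> nat" where
  "gS S b = (if fst b \<in> S \<or> snd b \<in> S then (snd b, fst b) else b)"

lemma gS_gS: "gS S (gS S b) = b"
  by (cases b) (auto simp: gS_def)

lemma arc_vec_swap: "arc_vec (snd b, fst b) u = - arc_vec b u"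
  by (simp add: arc_vec_def)

lemma gS_key:
  assumes sep: "\<And>b. b \<in> A \<Longrightarrow> fst b \<in> S \<or> snd b \<in> S \<Longrightarrow> fst b \<notin> W - S \<and> snd b \<notin> W - S"
    and b: "b \<in> A" and u: "u \<in> W"
  shows "arc_vec (gS S b) u = (if u \<in> S then - arc_vec b u else arc_vec b u)"
proof (cases "fst b \<in> S \<or> snd b \<in> S")
  case True
  then have "gS S b = (snd b, fst b)" by (simp add: gS_def)
  moreover have "u \<notin> S \<Longrightarrow> arc_vec b u = 0"
    using sep[OF b True] u by (auto simp: arc_vec_def)
  ultimately show ?thesis by (simp add: arc_vec_swap)
next
  case False
  then have "gS S b = b" by (simp add: gS_def)
  moreover have "u \<in> S \<Longrightarrow> arc_vec b u = 0"
    using False by (auto simp: arc_vec_def)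
  ultimately show ?thesis by simp
qed

lemma poly_image:
  assumes inv: "\<And>b. g (g b) = b"
    and key: "\<And>b u. b \<in> A \<Longrightarrow> u \<in> W \<Longrightarrow> arc_vec (g b) u = (if u \<in> S then - arc_vec b u else arc_vec b u)"
  shows "(\<lambda>x. restrict x W) ` dir_edge_polytope (g ` A) = flip W S ` (\<lambda>x. restrict x W) ` dir_edge_polytope A"
proof -
  have inj: "inj_on g A" by (metis inj_onI inv)
  have rep: "(\<Sum>a\<in>g ` A. h a) = (\<Sum>b\<in>A. h (g b))" for h :: "nat \<times> nat \<Rightarrow> real"
    using sum.reindex[OF inj, of h] by simp
  have fl: "restrict (\<lambda>u. \<Sum>b\<in>A. c b * arc_vec (g b) u) W
      = flip W S (restrict (\<lambda>u. \<Sum>b\<in>A. c b * arc_vec b u) W)" for c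
  proof
    fix k show "restrict (\<lambda>u. \<Sum>b\<in>A. c b * arc_vec (g b) u) W k
      = flip W S (restrict (\<lambda>u. \<Sum>b\<in>A. c b * arc_vec b u) W) k"
      by (cases "k \<in> W") (auto simp: flip_def key sum_negf[symmetric] intro!: sum.cong)
  qed
  show ?thesis
  proof
    show "(\<lambda>x. restrict x W) ` dir_edge_polytope (g ` A) \<subseteq> flip W S ` (\<lambda>x. restrict x W) ` dir_edge_polytope A"
    proof
      fix y assume "y \<in> (\<lambda>x. restrict x W) ` dir_edge_polytope (g ` A)"
      then obtain c where c: "\<forall>a\<in>g ` A. 0 \<le> c a" "(\<Sum>a\<in>g ` A. c a) = 1"
        and y: "y = restrict (\<lambda>u. \<Sum>a\<in>g ` A. c a * arc_vec a u) W"
        unfolding dir_edge_polytope_def by auto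
      have y': "y = restrict (\<lambda>u. \<Sum>b\<in>A. c (g b) * arc_vec (g b) u) W"
        unfolding y rep ..
      have "(\<lambda>u. \<Sum>b\<in>A. c (g b) * arc_vec b u) \<in> dir_edge_polytope A"
        unfolding dir_edge_polytope_def using c by (auto simp: rep)
      then show "y \<in> flip W S ` (\<lambda>x. restrict x W) ` dir_edge_polytope A"
        unfolding y' fl by blast
    qed
  next
    show "flip W S ` (\<lambda>x. restrict x W) ` dir_edge_polytope A \<subseteq> (\<lambda>x. restrict x W) ` dir_edge_polytope (g ` A)"
    proof
      fix y assume "y \<in> flip W S ` (\<lambda>x. restrict x W) ` dir_edge_polytope A"
      then obtain c where c: "\<forall>a\<in>A. 0 \<le> c a" "(\<Sum>a\<in>A. c a) = 1"
        and y: "y = flip W S (restrict (\<lambda>u. \<Sum>b\<in>A. c b * arc_vec b u) W)"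
        unfolding dir_edge_polytope_def by auto
      define c' where "c' = (\<lambda>a. c (g a))"
      have cc: "c' (g b) = c b" for b by (simp add: c'_def inv)
      have "(\<lambda>u. \<Sum>a\<in>g ` A. c' a * arc_vec a u) \<in> dir_edge_polytope (g ` A)"
        unfolding dir_edge_polytope_def using c by (auto simp: rep cc intro!: exI[of _ c'])
      moreover have "restrict (\<lambda>u. \<Sum>a\<in>g ` A. c' a * arc_vec a u) W = y"
        unfolding y rep cc fl ..
      ultimately show "y \<in> (\<lambda>x. restrict x W) ` dir_edge_polytope (g ` A)" by blast
    qed
  qed
qed

lemma compr_img: "{f t | t. P t} = f ` {t. P t}" by auto

lemma AG_image: assumes "i \<ge> 3" shows "AG i = gS (SS i) ` AH i"
proof -
  have 1: "gS (SS i) ` {(0,1),(1,2),(2,0),(1,0),(0,3)} = {(0,1),(1,2),(2,0),(1,0),(3,0)}"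
    using assms by (simp add: gS_def SS_def)
  have 2: "gS (SS i) ` ((\<lambda>t. (t, t+1)) ` {t. 3\<le>t \<and> t<i}) = (\<lambda>t. (t+1, t)) ` {t. 3\<le>t \<and> t<i}"
    unfolding image_image by (intro image_cong refl) (auto simp: gS_def SS_def)
  have 3: "gS (SS i) ` ((\<lambda>t. (t, 0)) ` {t. 3\<le>t \<and> t\<le>i}) = (\<lambda>t. (0, t)) ` {t. 3\<le>t \<and> t\<le>i}"
    unfolding image_image by (intro image_cong refl) (auto simp: gS_def SS_def)
  show ?thesis
    unfolding AG_def AH_def image_Un compr_img 1 2 3 ..
qed

lemma sep_AH: "b \<in> AH i \<Longrightarrow> fst b \<in> SS i \<or> snd b \<in> SS i \<Longrightarrow>
    fst b \<notin> (VV i - {0}) - SS i \<and> snd b \<notin> (VV i - {0}) - SS i"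
  unfolding AH_def VV_def SS_def by auto

lemma vol_eq: assumes "i \<ge> 3" shows "norm_volume (VV i) (AG i) = norm_volume (VV i) (AH i)"
proof -
  let ?W = "VV i - {Min (VV i)}"
  let ?M = "PiM ?W (\<lambda>_. lborel :: real measure)"
  have fin: "finite ?W" by (simp add: VV_def)
  have img: "(\<lambda>x. restrict x ?W) ` dir_edge_polytope (AG i)
      = flip ?W (SS i) ` (\<lambda>x. restrict x ?W) ` dir_edge_polytope (AH i)"
    unfolding AG_image[OF assms]
  proof (rule poly_image[OF gS_gS])
    fix b u assume "b \<in> AH i" "u \<in> ?W"
    moreover have "Min (VV i) = 0" unfolding VV_def by (rule Min_eqI) auto
    ultimately show "arc_vec (gS (SS i) b) u = (if u \<in> SS i then - arc_vec b u else arc_vec b u)"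
      using gS_key[of "AH i" "SS i" "VV i - {0}" b u] sep_AH[of _ i] by auto
  qed
  have sub: "(\<lambda>x. restrict x ?W) ` dir_edge_polytope (AH i) \<subseteq> space ?M"
    by (auto simp: space_PiM PiE_def)
  show ?thesis
    unfolding norm_volume_def Let_def img measure_flip_image[OF fin sub] ..
qed

theorem theorem9:
  fixes i :: nat
  assumes "i \<ge> 8"
  shows "\<exists>j::nat. j < i \<and>
           (\<exists>VG AG VH AH.
              digraph VG AG \<and> digraph VH AH \<and>
              diameter VG AG = enat i \<and> diameter VH AH = enat j \<and>
              norm_volume VG AG = norm_volume VH AH)"
proof -
  have "diameter (VV i) (AH i) \<le> enat (i - 1)" using diam_H assms by simp
  then obtain j where j: "diameter (VV i) (AH i) = enat j" "j \<le> i - 1"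
    by (cases "diameter (VV i) (AH i)") auto
  show ?thesis
    apply (rule exI[of _ j])
    using j assms digraph_G[of i] digraph_H[of i] diam_G[of i] vol_eq[of i]
    by (intro conjI exI[of _ "VV i"] exI[of _ "AG i"] exI[of _ "AH i"]) auto
qed

end
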